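(* Let $I$ be a finite or infinite non-empty index set and let $\mathbb{K}$ be a positive commutative monoid such that the inner consistency property holds for $\mathbb{K}$-relations via a join operation $\bowtie_{\mathbb{K}}$. Then the inner consistency property holds for $\mathbb{K}^I_{\mathrm{fin}}$-relations via the component-wise join operation $\bowtie^I_{\mathbb{K}}$. Furthermore, if $\bowtie_{\mathbb{K}}$ produces $c$-sparse witnesses for some positive real $c$, then for $\mathbb{K}^I_{\mathrm{fin}}$-relations $R,S$ the witness $R\bowtie^I_{\mathbb{K}}S$ is $cd$-sparse, where $d$ is any bound on the number of non-zero components of the annotation of any tuple in the supports of $R$ or $S$. In particular, if $I$ is finite and the inner consistency property holds for $\mathbb{K}$-relations with sparse witnesses, then the inner consistency property holds for $\mathbb{K}^I$-relations with sparse witnesses.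
   Context: Positive: $p+q=0\Rightarrow p=q=0$. $\mathbb{K}^I$: maps $I\to K$ with pointwise addition; $\mathbb{K}^I_{\mathrm{fin}}$: those with finitely many non-zero values. For a finite attribute set $X$ (attributes have domains), a $\mathbb{M}$-relation over $X$ is a map $R$ from $X$-tuples to the monoid's universe with finite support $R'=\{t:R(t)\ne0\}$; $t[Y]$ is restriction; marginals $R[Y](t)=\sum_{r\in R',r[Y]=t}R(r)$. $R(X),S(Y)$ are inner consistent if $R[X\cap Y]=S[X\cap Y]$; a $W$ over $X\cup Y$ witnesses their consistency if $W[X]=R$, $W[Y]=S$. A join operation assigns to each pair of inner consistent $\mathbb{K}$-relations $R(X),S(Y)$ a $\mathbb{K}$-relation $R\bowtie_{\mathbb{K}}S$ over $X\cup Y$; the inner consistency property holds via it if $R\bowtie_{\mathbb{K}}S$ always witnesses consistency of $R,S$. It produces $c$-sparse witnesses if moreover $|(R\bowtie_{\mathbb{K}}S)'|\le(|R'|+|S'|)c$ always. The inner consistency property holds with sparse witnesses if there is $c>0$ such that any two inner consistent relations have a witness $W$ with $|W'|\le(|R'|+|S'|)c$. Component-wise join: for inner consistent $\mathbb{K}^I_{\mathrm{fin}}$-relations $R(X),S(Y)$, take a fresh attribute $C$ with domain $I$, define $\mathbb{K}$-relations $R_0(X\cup\{C\})$, $S_0(Y\cup\{C\})$ by $R_0(r,i)=R(r)(i)$, $S_0(s,i)=S(s)(i)$, and let $(R\bowtie^I_{\mathbb{K}}S)(t)(i)=(R_0\bowtie_{\mathbb{K}}S_0)(t,i)$ for $X\cup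 Y$-tuples $t$ and $i\in I$. *)

theory Defs
  imports "HOL-Library.FuncSet" "HOL-Library.Function_Algebras" Complex_Main
begin

text \<open>Attributes have type 'a, attribute values type 'v, and D assigns to each
attribute its domain. An X-tuple is an extensional function in PiE X D.\<close>

definition supp :: "(('a \<Rightarrow> 'v) \<Rightarrow> 'm::zero) \<Rightarrow> ('a \<Rightarrow> 'v) set" where
  "supp R = {t. R t \<noteq> 0}"

definition is_rel :: "('a \<Rightarrow> 'v set) \<Rightarrow> 'm::zero set \<Rightarrow> 'a set \<Rightarrow> (('a \<Rightarrow> 'v) \<Rightarrow> 'm) \<Rightarrow> bool" where
  "is_rel D A X R \<longleftrightarrow> finite (supp R) \<and> (\<forall>t. R t \<noteq> 0 \<longrightarrow> t \<in> PiE X D) \<and> (\<forall>t. R t \<in> A)"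

definition marg :: "(('a \<Rightarrow> 'v) \<Rightarrow> 'm::comm_monoid_add) \<Rightarrow> 'a set \<Rightarrow> ('a \<Rightarrow> 'v) \<Rightarrow> 'm" where
  "marg R Y t = (\<Sum>r \<in> {r \<in> supp R. restrict r Y = t}. R r)"

definition inner_cons :: "'a set \<Rightarrow> 'a set \<Rightarrow> (('a \<Rightarrow> 'v) \<Rightarrow> 'm::comm_monoid_add) \<Rightarrow> (('a \<Rightarrow> 'v) \<Rightarrow> 'm) \<Rightarrow> bool" where
  "inner_cons X Y R S \<longleftrightarrow> marg R (X \<inter> Y) = marg S (X \<inter> Y)"

definition witness :: "('a \<Rightarrow> 'v set) \<Rightarrow> 'm::comm_monoid_add set \<Rightarrow> 'a set \<Rightarrow> 'a set
    \<Rightarrow> (('a \<Rightarrow> 'v) \<Rightarrow> 'm) \<Rightarrow> (('a \<Rightarrow> 'v) \<Rightarrow> 'm) \<Rightarrow> (('a \<Rightarrow> 'v) \<Rightarrow> 'm) \<Rightarrow> bool" where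
  "witness D A X Y R S W \<longleftrightarrow> is_rel D A (X \<union> Y) W \<and> marg W X = R \<and> marg W Y = S"

definition positive_monoid :: "'m::comm_monoid_add itself \<Rightarrow> bool" where
  "positive_monoid _ \<longleftrightarrow> (\<forall>p q::'m. p + q = 0 \<longrightarrow> p = 0 \<and> q = 0)"

definition icp_via :: "('a \<Rightarrow> 'v set) \<Rightarrow> 'm::comm_monoid_add set
    \<Rightarrow> ('a set \<Rightarrow> 'a set \<Rightarrow> (('a \<Rightarrow> 'v) \<Rightarrow> 'm) \<Rightarrow> (('a \<Rightarrow> 'v) \<Rightarrow> 'm) \<Rightarrow> (('a \<Rightarrow> 'v) \<Rightarrow> 'm)) \<Rightarrow> bool" where
  "icp_via D A J \<longleftrightarrow> (\<forall>X Y R S. finite X \<longrightarrow> finite Y \<longrightarrow> is_rel D A X R \<longrightarrow> is_rel D A Y S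
      \<longrightarrow> inner_cons X Y R S \<longrightarrow> witness D A X Y R S (J X Y R S))"

definition sparse_via :: "('a \<Rightarrow> 'v set) \<Rightarrow> 'm::comm_monoid_add set
    \<Rightarrow> ('a set \<Rightarrow> 'a set \<Rightarrow> (('a \<Rightarrow> 'v) \<Rightarrow> 'm) \<Rightarrow> (('a \<Rightarrow> 'v) \<Rightarrow> 'm) \<Rightarrow> (('a \<Rightarrow> 'v) \<Rightarrow> 'm)) \<Rightarrow> real \<Rightarrow> bool" where
  "sparse_via D A J c \<longleftrightarrow> (\<forall>X Y R S. finite X \<longrightarrow> finite Y \<longrightarrow> is_rel D A X R \<longrightarrow> is_rel D A Y S
      \<longrightarrow> inner_cons X Y R S
      \<longrightarrow> real (card (supp (J X Y R S))) \<le> (real (card (supp R)) + real (card (supp S))) * c)"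

definition icp_sparse :: "('a \<Rightarrow> 'v set) \<Rightarrow> 'm::comm_monoid_add set \<Rightarrow> bool" where
  "icp_sparse D A \<longleftrightarrow> (\<exists>c>0. \<forall>X Y R S. finite X \<longrightarrow> finite Y \<longrightarrow> is_rel D A X R \<longrightarrow> is_rel D A Y S
      \<longrightarrow> inner_cons X Y R S
      \<longrightarrow> (\<exists>W. witness D A X Y R S W \<and>
              real (card (supp W)) \<le> (real (card (supp R)) + real (card (supp S))) * c))"

text \<open>K^I (maps I \<rightarrow> K, represented as functions that vanish outside I) and
K^I_fin (those with finitely many non-zero values).\<close>
definition KI :: "'i set \<Rightarrow> ('i \<Rightarrow> 'k::zero) set" where
  "KI I = {f. \<forall>i. i \<notin> I \<longrightarrow> f i = 0}"

definition KI_fin :: "'i set \<Rightarrow> ('i \<Rightarrow> 'k::zero) set" where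
  "KI_fin I = {f \<in> KI I. finite {i. f i \<noteq> 0}}"

definition lift_rel :: "('a \<Rightarrow> 'v set) \<Rightarrow> 'a \<Rightarrow> 'a set \<Rightarrow> (('a \<Rightarrow> 'v) \<Rightarrow> ('v \<Rightarrow> 'k::zero))
    \<Rightarrow> ('a \<Rightarrow> 'v) \<Rightarrow> 'k" where
  "lift_rel D C X R = (\<lambda>t. if t \<in> PiE (insert C X) D then R (restrict t X) (t C) else 0)"

text \<open>Component-wise join using the fresh attribute C (whose domain is I).\<close>
definition cw_join :: "('a \<Rightarrow> 'v set) \<Rightarrow> 'v set
    \<Rightarrow> ('a set \<Rightarrow> 'a set \<Rightarrow> (('a \<Rightarrow> 'v) \<Rightarrow> 'k) \<Rightarrow> (('a \<Rightarrow> 'v) \<Rightarrow> 'k) \<Rightarrow> (('a \<Rightarrow> 'v) \<Rightarrow> 'k::zero))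
    \<Rightarrow> 'a \<Rightarrow> 'a set \<Rightarrow> 'a set \<Rightarrow> (('a \<Rightarrow> 'v) \<Rightarrow> ('v \<Rightarrow> 'k)) \<Rightarrow> (('a \<Rightarrow> 'v) \<Rightarrow> ('v \<Rightarrow> 'k))
    \<Rightarrow> ('a \<Rightarrow> 'v) \<Rightarrow> ('v \<Rightarrow> 'k)" where
  "cw_join D I J C X Y R S = (\<lambda>t. if t \<in> PiE (X \<union> Y) D then
      (\<lambda>i. if i \<in> I then J (insert C X) (insert C Y) (lift_rel D C X R) (lift_rel D C Y S) (t(C := i)) else 0)
    else 0)"

end

theory Submission imports Defs begin

lemma sum_fun_apply: "(sum f A) x = (\<Sum>a\<in>A. f a x)"
  by (induction A rule: infinite_finite_induct) auto

lemma marg_apply: "marg W Z t i = (\<Sum>r\<in>{r \<in> supp W. restrict r Z = t}. W r i)"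
  unfolding marg_def by (rule sum_fun_apply)

lemma PiE_upd_restrict:
  assumes "u \<in> PiE (insert C X) D" "C \<notin> X"
  shows "(restrict u X)(C := u C) = u"
proof
  fix x show "((restrict u X)(C := u C)) x = u x"
    using assms by (cases "x = C") (auto simp: PiE_def extensional_def)
qed

lemma lift_marg:
  fixes W :: "('a \<Rightarrow> 'v) \<Rightarrow> ('v \<Rightarrow> 'k::comm_monoid_add)"
  assumes fin: "finite (supp W)" and ext: "\<And>t. W t \<noteq> 0 \<Longrightarrow> t \<in> PiE X' D"
    and Z: "Z \<subseteq> X'" and C: "C \<notin> X'"
  shows "lift_rel D C Z (marg W Z) = marg (lift_rel D C X' W) (insert C Z)"
proof
  fix u
  let ?L = "lift_rel D C X' W"
  show "lift_rel D C Z (marg W Z) u = marg ?L (insert C Z) u"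
  proof (cases "u \<in> PiE (insert C Z) D")
    case False
    have E: "{r0 \<in> supp ?L. restrict r0 (insert C Z) = u} = {}"
    proof (safe)
      fix r0 assume "r0 \<in> supp ?L" "u = restrict r0 (insert C Z)"
      then have "r0 \<in> PiE (insert C X') D" unfolding supp_def lift_rel_def by (auto split: if_splits)
      then have "restrict r0 (insert C Z) \<in> PiE (insert C Z) D" using Z by (auto simp: PiE_def Pi_def)
      then show "r0 \<in> {}" using False \<open>u = _\<close> by simp
    qed
    have "marg ?L (insert C Z) u = 0" unfolding marg_def E by simp
    then show ?thesis using False unfolding lift_rel_def by simp
  next
    case True
    define i where "i = u C"
    have iD: "i \<in> D C" using True i_def by auto
    have "lift_rel D C Z (marg W Z) u = (\<Sum>r\<in>{r \<in> supp W. restrict r Z = restrict u Z}. W r i)"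
      using True unfolding lift_rel_def i_def by (simp add: marg_apply)
    also have "\<dots> = (\<Sum>r\<in>{r \<in> supp W. restrict r Z = restrict u Z \<and> W r i \<noteq> 0}. W r i)"
      by (rule sum.mono_neutral_right) (use fin in auto)
    also have "\<dots> = (\<Sum>r0\<in>{r0 \<in> supp ?L. restrict r0 (insert C Z) = u}. ?L r0)"
    proof (rule sum.reindex_bij_witness[where i = "\<lambda>r0. restrict r0 X'" and j = "\<lambda>r. r(C := i)"])
      fix r0 assume r0: "r0 \<in> {r0 \<in> supp ?L. restrict r0 (insert C Z) = u}"
      then have P: "r0 \<in> PiE (insert C X') D" and nz: "W (restrict r0 X') (r0 C) \<noteq> 0"
        unfolding supp_def lift_rel_def by (auto split: if_splits)
      have rC: "r0 C = i" using r0 i_def by auto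
      show "(restrict r0 X')(C := i) = r0" using PiE_upd_restrict[OF P C] rC by simp
      have "restrict (restrict r0 X') Z = restrict u Z"
      proof
        fix x show "restrict (restrict r0 X') Z x = restrict u Z x"
          using r0 Z by (auto simp: restrict_def fun_eq_iff) (metis (full_types))
      qed
      then show "restrict r0 X' \<in> {r \<in> supp W. restrict r Z = restrict u Z \<and> W r i \<noteq> 0}"
        using nz rC unfolding supp_def by auto
    next
      fix r assume r: "r \<in> {r \<in> supp W. restrict r Z = restrict u Z \<and> W r i \<noteq> 0}"
      then have P: "r \<in> PiE X' D" using ext unfolding supp_def by auto
      then have P': "r(C := i) \<in> PiE (insert C X') D" using iD C by (auto simp: PiE_def extensional_def)
      have rr: "restrict (r(C := i)) X' = r" using P C by (auto simp: PiE_def extensional_def restrict_def fun_eq_iff)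
      show "restrict (r(C := i)) X' = r" by (rule rr)
      have "restrict (r(C := i)) (insert C Z) = u"
      proof
        fix x show "restrict (r(C := i)) (insert C Z) x = u x"
          using r True C Z i_def
          by (cases "x = C") (auto simp: restrict_def fun_eq_iff PiE_def extensional_def, metis)
      qed
      then show "r(C := i) \<in> {r0 \<in> supp ?L. restrict r0 (insert C Z) = u}"
        using P' rr r unfolding supp_def lift_rel_def by simp
      show "?L (r(C := i)) = W r i" using P' rr unfolding lift_rel_def by simp
    qed
    also have "\<dots> = marg ?L (insert C Z) u" unfolding marg_def by simp
    finally show ?thesis .
  qed
qed

definition unlift :: "('a \<Rightarrow> 'v set) \<Rightarrow> 'v set \<Rightarrow> 'a \<Rightarrow> 'a set \<Rightarrow> (('a \<Rightarrow> 'v) \<Rightarrow> 'k::zero)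
    \<Rightarrow> ('a \<Rightarrow> 'v) \<Rightarrow> ('v \<Rightarrow> 'k)" where
  "unlift D I C X' W0 = (\<lambda>t. if t \<in> PiE X' D then (\<lambda>i. if i \<in> I then W0 (t(C := i)) else 0) else 0)"

lemma cw_join_unlift:
  "cw_join D I J C X Y R S = unlift D I C (X \<union> Y) (J (insert C X) (insert C Y) (lift_rel D C X R) (lift_rel D C Y S))"
  unfolding cw_join_def unlift_def by simp

lemma upd_restrict:
  assumes "t \<in> PiE X D" "C \<notin> X"
  shows "restrict (t(C := i)) X = t"
  using assms by (auto simp: PiE_def extensional_def restrict_def fun_eq_iff)

lemma upd_PiE:
  assumes "t \<in> PiE X D" "i \<in> D C"
  shows "t(C := i) \<in> PiE (insert C X) D"
  using assms by (auto simp: PiE_def extensional_def)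

lemma lift_unlift:
  assumes "is_rel D A (insert C X') W0" "D C = I" "C \<notin> X'"
  shows "lift_rel D C X' (unlift D I C X' W0) = W0"
proof
  fix u show "lift_rel D C X' (unlift D I C X' W0) u = W0 u"
  proof (cases "u \<in> PiE (insert C X') D")
    case True
    have "restrict u X' \<in> PiE X' D" using True by auto
    moreover have "u C \<in> I" using True assms by auto
    ultimately show ?thesis using True PiE_upd_restrict[OF True assms(3)]
      unfolding lift_rel_def unlift_def by simp
  next
    case False
    then show ?thesis using assms(1) unfolding lift_rel_def is_rel_def by auto
  qed
qed

lemma lift_inj:
  assumes a1: "\<forall>t. R t \<noteq> 0 \<longrightarrow> t \<in> PiE X D" and a2: "\<forall>t. R t \<in> KI I"
    and a3: "\<forall>t. R' t \<noteq> 0 \<longrightarrow> t \<in> PiE X D" and a4: "\<forall>t. R' t \<in> KI I"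
    and C: "C \<notin> X" "D C = I" and L: "lift_rel D C X R = lift_rel D C X R'"
  shows "R = R'"
proof (intro ext)
  fix t i
  show "R t i = R' t i"
  proof (cases "t \<in> PiE X D")
    case True
    show ?thesis
    proof (cases "i \<in> I")
      case True2: True
      have iD: "i \<in> D C" using True2 C(2) by simp
      have P: "t(C := i) \<in> PiE (insert C X) D" by (rule upd_PiE[OF True iD])
      have rr: "restrict (t(C := i)) X = t" by (rule upd_restrict[OF True C(1)])
      have "lift_rel D C X R (t(C := i)) = lift_rel D C X R' (t(C := i))" using L by (rule arg_cong)
      then show ?thesis unfolding lift_rel_def if_P[OF P] rr fun_upd_same .
    next
      case False
      have "R t \<in> KI I" "R' t \<in> KI I" by (rule a2[rule_format], rule a4[rule_format])
      then have "R t i = 0" "R' t i = 0" using False unfolding KI_def mem_Collect_eq by auto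
      then show ?thesis by simp
    qed
  next
    case False
    have "R t = 0"
    proof (rule ccontr)
      assume "R t \<noteq> 0" then have "t \<in> PiE X D" by (rule a1[rule_format])
      with False show False by contradiction
    qed
    moreover have "R' t = 0"
    proof (rule ccontr)
      assume "R' t \<noteq> 0" then have "t \<in> PiE X D" by (rule a3[rule_format])
      with False show False by contradiction
    qed
    ultimately show ?thesis by simp
  qed
qed

lemma lift_is_rel:
  assumes R: "is_rel D (KI_fin I) X R" and C: "C \<notin> X" "D C = I"
  shows "is_rel D UNIV (insert C X) (lift_rel D C X R)"
    "card (supp (lift_rel D C X R)) \<le> (\<Sum>r\<in>supp R. card {i. R r i \<noteq> 0})"
proof -
  let ?S = "SIGMA r:supp R. {i. R r i \<noteq> 0}"
  have finS: "finite ?S"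
    using R unfolding is_rel_def KI_fin_def by (intro finite_SigmaI) auto
  have sub: "supp (lift_rel D C X R) \<subseteq> (\<lambda>(r, i). r(C := i)) ` ?S"
  proof
    fix t assume t: "t \<in> supp (lift_rel D C X R)"
    then have P: "t \<in> PiE (insert C X) D" and nz: "R (restrict t X) (t C) \<noteq> 0"
      unfolding supp_def lift_rel_def by (auto split: if_splits)
    have "restrict t X \<in> supp R" using nz unfolding supp_def by auto
    then have "(restrict t X, t C) \<in> ?S" using nz by auto
    moreover have "t = (\<lambda>(r, i). r(C := i)) (restrict t X, t C)" using PiE_upd_restrict[OF P C(1)] by simp
    ultimately show "t \<in> (\<lambda>(r, i). r(C := i)) ` ?S" by blast
  qed
  show "is_rel D UNIV (insert C X) (lift_rel D C X R)"
  proof -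
    have a: "finite (supp (lift_rel D C X R))" using finite_subset[OF sub] finS by blast
    have b: "\<forall>t. lift_rel D C X R t \<noteq> 0 \<longrightarrow> t \<in> PiE (insert C X) D" unfolding lift_rel_def by auto
    show ?thesis unfolding is_rel_def using a b by blast
  qed
  have "card (supp (lift_rel D C X R)) \<le> card ((\<lambda>(r, i). r(C := i)) ` ?S)"
    by (rule card_mono[OF _ sub]) (use finS in auto)
  also have "\<dots> \<le> card ?S" by (rule card_image_le[OF finS])
  also have "\<dots> = (\<Sum>r\<in>supp R. card {i. R r i \<noteq> 0})"
    using R unfolding is_rel_def KI_fin_def by (intro card_SigmaI) auto
  finally show "card (supp (lift_rel D C X R)) \<le> (\<Sum>r\<in>supp R. card {i. R r i \<noteq> 0})" .
qed

lemma unlift_is_rel: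
  assumes W: "is_rel D A (insert C X') W0" and C: "C \<notin> X'" "D C = I"
  shows "is_rel D (KI_fin I) X' (unlift D I C X' W0)"
    "card (supp (unlift D I C X' W0)) \<le> card (supp W0)"
proof -
  have finW: "finite (supp W0)" using W unfolding is_rel_def by auto
  have sub: "supp (unlift D I C X' W0) \<subseteq> (\<lambda>s. restrict s X') ` supp W0"
  proof
    fix t assume "t \<in> supp (unlift D I C X' W0)"
    then obtain i where P: "t \<in> PiE X' D" and i: "i \<in> I" "W0 (t(C := i)) \<noteq> 0"
      unfolding supp_def unlift_def by (cases "t \<in> PiE X' D") (auto split: if_splits simp: fun_eq_iff)
    then have "t(C := i) \<in> supp W0" unfolding supp_def by auto
    then show "t \<in> (\<lambda>s. restrict s X') ` supp W0" using upd_restrict[OF P C(1)] by (metis image_eqI)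
  qed
  have fin2: "finite {i. unlift D I C X' W0 t i \<noteq> 0}" for t
  proof -
    have "{i. unlift D I C X' W0 t i \<noteq> 0} \<subseteq> (\<lambda>s. s C) ` supp W0"
    proof
      fix i assume "i \<in> {i. unlift D I C X' W0 t i \<noteq> 0}"
      then have "W0 (t(C := i)) \<noteq> 0" unfolding unlift_def by (auto split: if_splits)
      then have "t(C := i) \<in> supp W0" unfolding supp_def by auto
      then show "i \<in> (\<lambda>s. s C) ` supp W0" by (metis fun_upd_same image_eqI)
    qed
    then show ?thesis using finW finite_subset by blast
  qed
  show "is_rel D (KI_fin I) X' (unlift D I C X' W0)"
  proof -
    have a: "finite (supp (unlift D I C X' W0))" using finite_subset[OF sub] finW by blast
    have b: "\<forall>t. unlift D I C X' W0 t \<noteq> 0 \<longrightarrow> t \<in> PiE X' D" unfolding unlift_def by auto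
    have c: "\<forall>t. unlift D I C X' W0 t \<in> KI_fin I" unfolding KI_fin_def KI_def
      using fin2 unfolding unlift_def by auto
    show ?thesis unfolding is_rel_def using a b c by blast
  qed
  have "card (supp (unlift D I C X' W0)) \<le> card ((\<lambda>s. restrict s X') ` supp W0)"
    by (rule card_mono[OF _ sub]) (use finW in auto)
  also have "\<dots> \<le> card (supp W0)" by (rule card_image_le[OF finW])
  finally show "card (supp (unlift D I C X' W0)) \<le> card (supp W0)" .
qed

lemma marg_PiE:
  assumes "\<forall>t. W t \<noteq> 0 \<longrightarrow> t \<in> PiE X' D" "Z \<subseteq> X'" "marg W Z t \<noteq> 0"
  shows "t \<in> PiE Z D"
proof -
  have "{r \<in> supp W. restrict r Z = t} \<noteq> {}"
  proof
    assume E: "{r \<in> supp W. restrict r Z = t} = {}"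
    have "marg W Z t = 0" unfolding marg_def E by simp
    then show False using assms(3) by simp
  qed
  then obtain r where r: "r \<in> supp W" "restrict r Z = t" by blast
  then have "r \<in> PiE X' D" using assms(1) unfolding supp_def by blast
  then show ?thesis using r assms(2) by (auto simp: PiE_def Pi_def)
qed

lemma marg_KI:
  assumes "\<forall>t. W t \<in> KI I"
  shows "marg W Z t \<in> KI I"
  unfolding KI_def
proof (intro CollectI allI impI)
  fix i assume "i \<notin> I"
  then have "\<forall>r. W r i = 0" using assms unfolding KI_def by blast
  then show "marg W Z t i = 0" unfolding marg_apply by simp
qed


lemma is_rel_mono: "is_rel D A X R \<Longrightarrow> A \<subseteq> B \<Longrightarrow> is_rel D B X R"
  unfolding is_rel_def by blast

lemma KI_fin_sub: "KI_fin I \<subseteq> KI I"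
  unfolding KI_fin_def by blast

lemma KI_fin_eq: "finite I \<Longrightarrow> KI_fin I = KI I"
  unfolding KI_fin_def KI_def by (auto intro: finite_subset)

lemma is_rel_PiE: "is_rel D A X R \<Longrightarrow> \<forall>t. R t \<noteq> 0 \<longrightarrow> t \<in> PiE X D"
  unfolding is_rel_def by (elim conjE)

lemma is_rel_fin: "is_rel D A X R \<Longrightarrow> finite (supp R)"
  unfolding is_rel_def by (elim conjE)

lemma is_rel_vals: "is_rel D A X R \<Longrightarrow> \<forall>t. R t \<in> A"
  unfolding is_rel_def by (elim conjE)

lemma lift_inner:
  assumes R: "is_rel D (KI_fin I) X R" and S: "is_rel D (KI_fin I) Y S"
    and C: "C \<notin> X \<union> Y" and ic: "inner_cons X Y R S"
  shows "inner_cons (insert C X) (insert C Y) (lift_rel D C X R) (lift_rel D C Y S)"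
proof -
  have e: "insert C X \<inter> insert C Y = insert C (X \<inter> Y)" by blast
  have "marg (lift_rel D C X R) (insert C (X \<inter> Y)) = lift_rel D C (X \<inter> Y) (marg R (X \<inter> Y))"
    by (rule lift_marg[symmetric]) (use is_rel_fin[OF R] is_rel_PiE[OF R] C in auto)
  also have "\<dots> = lift_rel D C (X \<inter> Y) (marg S (X \<inter> Y))" using ic unfolding inner_cons_def by simp
  also have "\<dots> = marg (lift_rel D C Y S) (insert C (X \<inter> Y))"
    by (rule lift_marg) (use is_rel_fin[OF S] is_rel_PiE[OF S] C in auto)
  finally show ?thesis unfolding inner_cons_def e .
qed

lemma marg_unlift_eq:
  assumes U: "is_rel D (KI_fin I) X' U" and R: "is_rel D (KI_fin I) X R"
    and C: "C \<notin> X'" "D C = I" and XX: "X \<subseteq> X'"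
    and M: "marg (lift_rel D C X' U) (insert C X) = lift_rel D C X R"
  shows "marg U X = R"
proof (rule lift_inj[where C = C and D = D and X = X and I = I])
  show "\<forall>t. marg U X t \<noteq> 0 \<longrightarrow> t \<in> PiE X D"
    using marg_PiE[OF is_rel_PiE[OF U] XX] by blast
  show "\<forall>t. marg U X t \<in> KI I"
    using marg_KI is_rel_vals[OF U] KI_fin_sub by blast
  show "\<forall>t. R t \<noteq> 0 \<longrightarrow> t \<in> PiE X D" by (rule is_rel_PiE[OF R])
  show "\<forall>t. R t \<in> KI I" using is_rel_vals[OF R] KI_fin_sub by blast
  show "C \<notin> X" using C XX by blast
  show "D C = I" by (rule C(2))
  have "lift_rel D C X (marg U X) = marg (lift_rel D C X' U) (insert C X)"
    by (rule lift_marg) (use is_rel_fin[OF U] is_rel_PiE[OF U] C XX in auto)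
  then show "lift_rel D C X (marg U X) = lift_rel D C X R" using M by simp
qed

lemma main_witness:
  assumes C: "C \<notin> X \<union> Y" "D C = I"
    and R: "is_rel D (KI_fin I) X R" and S: "is_rel D (KI_fin I) Y S"
    and W0: "witness D UNIV (insert C X) (insert C Y) (lift_rel D C X R) (lift_rel D C Y S) W0"
  shows "witness D (KI_fin I) X Y R S (unlift D I C (X \<union> Y) W0)"
    "card (supp (unlift D I C (X \<union> Y) W0)) \<le> card (supp W0)"
proof -
  have e: "insert C X \<union> insert C Y = insert C (X \<union> Y)" by blast
  have W0r: "is_rel D UNIV (insert C (X \<union> Y)) W0" using W0 unfolding witness_def e by blast
  have C': "C \<notin> X \<union> Y" using C by blast
  note Ur = unlift_is_rel[OF W0r C' C(2)]
  have LU: "lift_rel D C (X \<union> Y) (unlift D I C (X \<union> Y) W0) = W0"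
    by (rule lift_unlift[OF W0r C(2) C'])
  have m1: "marg (unlift D I C (X \<union> Y) W0) X = R"
    by (rule marg_unlift_eq[OF Ur(1) R C' C(2)]) (use W0 LU in \<open>auto simp: witness_def\<close>)
  have m2: "marg (unlift D I C (X \<union> Y) W0) Y = S"
    by (rule marg_unlift_eq[OF Ur(1) S C' C(2)]) (use W0 LU in \<open>auto simp: witness_def\<close>)
  show "witness D (KI_fin I) X Y R S (unlift D I C (X \<union> Y) W0)"
    unfolding witness_def using Ur(1) m1 m2 by blast
  show "card (supp (unlift D I C (X \<union> Y) W0)) \<le> card (supp W0)" by (rule Ur(2))
qed

lemma lift_card_bound:
  assumes R: "is_rel D (KI_fin I) X R" and C: "C \<notin> X" "D C = I"
    and d: "\<forall>t \<in> supp R. real (card {i. R t i \<noteq> 0}) \<le> d"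
  shows "real (card (supp (lift_rel D C X R))) \<le> real (card (supp R)) * d"
proof -
  have "real (card (supp (lift_rel D C X R))) \<le> real (\<Sum>r\<in>supp R. card {i. R r i \<noteq> 0})"
    using lift_is_rel(2)[OF R C] by linarith
  also have "\<dots> = (\<Sum>r\<in>supp R. real (card {i. R r i \<noteq> 0}))" by simp
  also have "\<dots> \<le> real (card (supp R)) * d"
    using sum_bounded_above[of "supp R" "\<lambda>r. real (card {i. R r i \<noteq> 0})" d] d by simp
  finally show ?thesis .
qed

theorem proposition31:
  fixes D :: "'a \<Rightarrow> 'v set"
    and I :: "'v set"
    and J :: "'a set \<Rightarrow> 'a set \<Rightarrow> (('a \<Rightarrow> 'v) \<Rightarrow> 'k::comm_monoid_add) \<Rightarrow> (('a \<Rightarrow> 'v) \<Rightarrow> 'k)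
              \<Rightarrow> (('a \<Rightarrow> 'v) \<Rightarrow> 'k)"
  assumes "I \<noteq> {}"
    and "positive_monoid TYPE('k)"
    and "icp_via D UNIV J"
  shows "(\<forall>C X Y (R :: ('a \<Rightarrow> 'v) \<Rightarrow> ('v \<Rightarrow> 'k)) S. C \<notin> X \<union> Y \<longrightarrow> D C = I \<longrightarrow> finite X \<longrightarrow> finite Y
            \<longrightarrow> is_rel D (KI_fin I) X R \<longrightarrow> is_rel D (KI_fin I) Y S \<longrightarrow> inner_cons X Y R S
            \<longrightarrow> witness D (KI_fin I) X Y R S (cw_join D I J C X Y R S))
    \<and> (\<forall>c. c > 0 \<longrightarrow> sparse_via D UNIV J c \<longrightarrow>
         (\<forall>C X Y (R :: ('a \<Rightarrow> 'v) \<Rightarrow> ('v \<Rightarrow> 'k)) S (d::real). C \<notin> X \<union> Y \<longrightarrow> D C = I \<longrightarrow> finite X \<longrightarrow> finite Y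
            \<longrightarrow> is_rel D (KI_fin I) X R \<longrightarrow> is_rel D (KI_fin I) Y S \<longrightarrow> inner_cons X Y R S
            \<longrightarrow> (\<forall>t \<in> supp R. real (card {i. R t i \<noteq> 0}) \<le> d)
            \<longrightarrow> (\<forall>t \<in> supp S. real (card {i. S t i \<noteq> 0}) \<le> d)
            \<longrightarrow> real (card (supp (cw_join D I J C X Y R S)))
                  \<le> (real (card (supp R)) + real (card (supp S))) * (c * d)))
    \<and> (finite I \<longrightarrow> (\<forall>X. finite X \<longrightarrow> (\<exists>C. C \<notin> X \<and> D C = I))
         \<longrightarrow> icp_sparse D (UNIV :: 'k set) \<longrightarrow> icp_sparse D (KI I :: ('v \<Rightarrow> 'k) set))"
proof (intro conjI allI impI)
  note icp = assms(3)[unfolded icp_via_def, rule_format]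
  have P1: "witness D (KI_fin I) X Y R S (cw_join D I J C X Y R S)
      \<and> card (supp (cw_join D I J C X Y R S))
         \<le> card (supp (J (insert C X) (insert C Y) (lift_rel D C X R) (lift_rel D C Y S)))"
    if C: "C \<notin> X \<union> Y" "D C = I" and fX: "finite X" and fY: "finite Y"
      and R: "is_rel D (KI_fin I) X R" and S: "is_rel D (KI_fin I) Y S"
      and ic: "inner_cons X Y R S"
    for C X Y and R S :: "('a \<Rightarrow> 'v) \<Rightarrow> ('v \<Rightarrow> 'k)"
  proof -
    have CX: "C \<notin> X" "C \<notin> Y" using C by blast+
    have w: "witness D UNIV (insert C X) (insert C Y) (lift_rel D C X R) (lift_rel D C Y S)
        (J (insert C X) (insert C Y) (lift_rel D C X R) (lift_rel D C Y S))"
      by (rule icp) (use fX fY lift_is_rel(1)[OF R CX(1) C(2)] lift_is_rel(1)[OF S CX(2) C(2)]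
          lift_inner[OF R S C(1) ic] in auto)
    show ?thesis unfolding cw_join_unlift using main_witness[OF C R S w] by blast
  qed
  {
    fix C X Y and R S :: "('a \<Rightarrow> 'v) \<Rightarrow> ('v \<Rightarrow> 'k)"
    assume "C \<notin> X \<union> Y" "D C = I" "finite X" "finite Y" "is_rel D (KI_fin I) X R"
      "is_rel D (KI_fin I) Y S" "inner_cons X Y R S"
    then show "witness D (KI_fin I) X Y R S (cw_join D I J C X Y R S)" using P1 by blast
  }
  {
    fix c :: real and C X Y and R S :: "('a \<Rightarrow> 'v) \<Rightarrow> ('v \<Rightarrow> 'k)" and d :: real
    assume c: "c > 0" and sp: "sparse_via D UNIV J c"
      and C: "C \<notin> X \<union> Y" "D C = I" and fX: "finite X" and fY: "finite Y"
      and R: "is_rel D (KI_fin I) X R" and S: "is_rel D (KI_fin I) Y S"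
      and ic: "inner_cons X Y R S"
      and dR: "\<forall>t \<in> supp R. real (card {i. R t i \<noteq> 0}) \<le> d"
      and dS: "\<forall>t \<in> supp S. real (card {i. S t i \<noteq> 0}) \<le> d"
    have CX: "C \<notin> X" "C \<notin> Y" using C by blast+
    let ?R0 = "lift_rel D C X R" and ?S0 = "lift_rel D C Y S"
    have b1: "real (card (supp (cw_join D I J C X Y R S)))
        \<le> real (card (supp (J (insert C X) (insert C Y) ?R0 ?S0)))"
      using P1[OF C fX fY R S ic] by simp
    have b2: "real (card (supp (J (insert C X) (insert C Y) ?R0 ?S0)))
        \<le> (real (card (supp ?R0)) + real (card (supp ?S0))) * c"
      by (rule sp[unfolded sparse_via_def, rule_format, OF _ _ lift_is_rel(1)[OF R CX(1) C(2)]
          lift_is_rel(1)[OF S CX(2) C(2)] lift_inner[OF R S C(1) ic]]) (use fX fY in simp_all)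
    have b3: "real (card (supp ?R0)) + real (card (supp ?S0))
        \<le> real (card (supp R)) * d + real (card (supp S)) * d"
      using lift_card_bound[OF R CX(1) C(2) dR] lift_card_bound[OF S CX(2) C(2) dS] by linarith
    have "(real (card (supp ?R0)) + real (card (supp ?S0))) * c
        \<le> (real (card (supp R)) * d + real (card (supp S)) * d) * c"
      using b3 c by (simp add: mult_right_mono)
    also have "\<dots> = (real (card (supp R)) + real (card (supp S))) * (c * d)" by (simp add: algebra_simps)
    finally show "real (card (supp (cw_join D I J C X Y R S)))
                  \<le> (real (card (supp R)) + real (card (supp S))) * (c * d)"
      using b1 b2 by linarith
  }
  {
    assume fI: "finite I" and fresh: "\<forall>X. finite X \<longrightarrow> (\<exists>C. C \<notin> X \<and> D C = I)"
      and sp: "icp_sparse D (UNIV :: 'k set)"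
    obtain c where cc: "c > 0 \<and> (\<forall>X Y (R :: ('a \<Rightarrow> 'v) \<Rightarrow> 'k) S. finite X \<longrightarrow> finite Y \<longrightarrow> is_rel D UNIV X R
        \<longrightarrow> is_rel D UNIV Y S \<longrightarrow> inner_cons X Y R S
        \<longrightarrow> (\<exists>W. witness D UNIV X Y R S W \<and>
              real (card (supp W)) \<le> (real (card (supp R)) + real (card (supp S))) * c))"
      using sp unfolding icp_sparse_def by (rule exE)
    have c: "c > 0" using cc by (rule conjunct1)
    note cw = cc[THEN conjunct2, rule_format]
    have cI: "card I > 0" using fI assms(1) by (simp add: card_gt_0_iff)
    have KE: "KI_fin I = (KI I :: ('v \<Rightarrow> 'k) set)" by (rule KI_fin_eq[OF fI])
    show "icp_sparse D (KI I :: ('v \<Rightarrow> 'k) set)"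
      unfolding icp_sparse_def
    proof (intro exI[of _ "c * real (card I)"] conjI allI impI)
      show "c * real (card I) > 0" using c cI by simp
      fix X Y and R S :: "('a \<Rightarrow> 'v) \<Rightarrow> ('v \<Rightarrow> 'k)"
      assume fX: "finite X" and fY: "finite Y" and R': "is_rel D (KI I) X R"
        and S': "is_rel D (KI I) Y S" and ic: "inner_cons X Y R S"
      have R: "is_rel D (KI_fin I) X R" using R' KE by simp
      have S: "is_rel D (KI_fin I) Y S" using S' KE by simp
      obtain C where C: "C \<notin> X \<union> Y" "D C = I" using fresh fX fY by blast
      have CX: "C \<notin> X" "C \<notin> Y" using C by blast+
      let ?R0 = "lift_rel D C X R" and ?S0 = "lift_rel D C Y S"
      obtain W0 where w: "witness D UNIV (insert C X) (insert C Y) ?R0 ?S0 W0"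
        and wc: "real (card (supp W0)) \<le> (real (card (supp ?R0)) + real (card (supp ?S0))) * c"
        using cw[of "insert C X" "insert C Y" ?R0 ?S0, OF _ _ lift_is_rel(1)[OF R CX(1) C(2)]
          lift_is_rel(1)[OF S CX(2) C(2)] lift_inner[OF R S C(1) ic]] fX fY by auto
      note mw = main_witness[OF C R S w]
      have dR: "\<forall>t \<in> supp R. real (card {i. R t i \<noteq> 0}) \<le> real (card I)"
      proof
        fix t
        have "{i. R t i \<noteq> 0} \<subseteq> I" using is_rel_vals[OF R'] unfolding KI_def by auto
        then show "real (card {i. R t i \<noteq> 0}) \<le> real (card I)" using fI by (simp add: card_mono)
      qed
      have dS: "\<forall>t \<in> supp S. real (card {i. S t i \<noteq> 0}) \<le> real (card I)"
      proof
        fix t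
        have "{i. S t i \<noteq> 0} \<subseteq> I" using is_rel_vals[OF S'] unfolding KI_def by auto
        then show "real (card {i. S t i \<noteq> 0}) \<le> real (card I)" using fI by (simp add: card_mono)
      qed
      have b3: "real (card (supp ?R0)) + real (card (supp ?S0))
          \<le> real (card (supp R)) * real (card I) + real (card (supp S)) * real (card I)"
        using lift_card_bound[OF R CX(1) C(2) dR] lift_card_bound[OF S CX(2) C(2) dS] by linarith
      have "(real (card (supp ?R0)) + real (card (supp ?S0))) * c
          \<le> (real (card (supp R)) * real (card I) + real (card (supp S)) * real (card I)) * c"
        using b3 c by (simp add: mult_right_mono)
      also have "\<dots> = (real (card (supp R)) + real (card (supp S))) * (c * real (card I))"
        by (simp add: algebra_simps)
      finally have fin: "real (card (supp (unlift D I C (X \<union> Y) W0)))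
          \<le> (real (card (supp R)) + real (card (supp S))) * (c * real (card I))"
        using mw(2) wc by linarith
      have "witness D (KI I) X Y R S (unlift D I C (X \<union> Y) W0)"
        using mw(1) KE by simp
      then show "\<exists>W. witness D (KI I) X Y R S W \<and>
              real (card (supp W)) \<le> (real (card (supp R)) + real (card (supp S))) * (c * real (card I))"
        using fin by blast
    qed
  }
qed

end
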